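(* Let $(a_n)_{n\ge0}$ be nonzero complex numbers with $|a_0|\ge|a_1|\ge\cdots$ and $\sum_n|a_n|^2<\infty$, and let $T$ be the weighted shift $Te_n=a_ne_{n+1}$. Then for every $S\in\mathcal A_T$, the partial sums $\sum_{k=1}^n\hat S(k)T^k$ converge to $S$ in operator norm as $n\to\infty$.
   Context: $H$ is a complex Hilbert space with orthonormal basis $\{e_n\}_{n\ge0}$, $Te_n=a_ne_{n+1}$, and $\mathcal A_T$ is the operator-norm closure of the polynomials $p(T)$ with $p(0)=0$. For $\lambda$ in the unit circle $\mathbb T$ let $W_\lambda e_n=\lambda^ne_n$; $\gamma_\lambda(S)=W_\lambda SW_\lambda^*$ defines a norm-continuous action of $\mathbb T$ on $\mathcal A_T$ by isometric automorphisms with $\gamma_\lambda(T)=\lambda T$. For $S\in\mathcal A_T$ and $k\ge1$, $\hat S(k)\in\mathbb C$ is defined by $\int_{\mathbb T}\gamma_\lambda(S)\lambda^{-k}\,dm(\lambda)=\hat S(k)T^k$, where $dm$ is normalized Haar measure on $\mathbb T$. *)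

theory Defs
  imports "HOL-Analysis.Analysis"
begin

text \<open>Concrete model: H = l2(nat) with e_n the standard unit vectors.
  Vectors are functions nat => complex; operators are maps on such functions,
  only their behaviour on l2 matters.\<close>

definition l2 :: "(nat \<Rightarrow> complex) set" where
  "l2 = {x. summable (\<lambda>n. (cmod (x n))\<^sup>2)}"

definition l2norm :: "(nat \<Rightarrow> complex) \<Rightarrow> real" where
  "l2norm x = sqrt (\<Sum>n. (cmod (x n))\<^sup>2)"

definition unitvec :: "nat \<Rightarrow> nat \<Rightarrow> complex" where
  "unitvec n = (\<lambda>m. if m = n then 1 else 0)"

definition wshift :: "(nat \<Rightarrow> complex) \<Rightarrow> (nat \<Rightarrow> complex) \<Rightarrow> (nat \<Rightarrow> complex)" where
  "wshift a x = (\<lambda>m. if m = 0 then 0 else a (m - 1) * x (m - 1))"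

definition bounded_op :: "((nat \<Rightarrow> complex) \<Rightarrow> (nat \<Rightarrow> complex)) \<Rightarrow> bool" where
  "bounded_op S \<longleftrightarrow>
     (\<forall>x\<in>l2. S x \<in> l2) \<and>
     (\<forall>x\<in>l2. \<forall>y\<in>l2. \<forall>c::complex. S (\<lambda>n. x n + c * y n) = (\<lambda>n. S x n + c * S y n)) \<and>
     (\<exists>C. \<forall>x\<in>l2. l2norm (S x) \<le> C * l2norm x)"

definition opnorm :: "((nat \<Rightarrow> complex) \<Rightarrow> (nat \<Rightarrow> complex)) \<Rightarrow> real" where
  "opnorm S = Sup {l2norm (S x) | x. x \<in> l2 \<and> l2norm x \<le> 1}"

definition polyop :: "(nat \<Rightarrow> complex) \<Rightarrow> (nat \<Rightarrow> complex) \<Rightarrow> nat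
                       \<Rightarrow> (nat \<Rightarrow> complex) \<Rightarrow> (nat \<Rightarrow> complex)" where
  "polyop a c N x = (\<lambda>m. \<Sum>k=1..N. c k * (wshift a ^^ k) x m)"

definition alg_T :: "(nat \<Rightarrow> complex) \<Rightarrow> ((nat \<Rightarrow> complex) \<Rightarrow> (nat \<Rightarrow> complex)) set" where
  "alg_T a = {S. bounded_op S \<and>
     (\<forall>\<epsilon>>0. \<exists>c N. opnorm (\<lambda>x m. S x m - polyop a c N x m) < \<epsilon>)}"

text \<open>W_lambda e_n = lambda^n e_n, and gamma_lambda(S) = W_lambda S W_lambda^*.\<close>
definition Wop :: "complex \<Rightarrow> (nat \<Rightarrow> complex) \<Rightarrow> (nat \<Rightarrow> complex)" where
  "Wop l x = (\<lambda>n. l ^ n * x n)"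

definition gamma_act :: "complex \<Rightarrow> ((nat \<Rightarrow> complex) \<Rightarrow> (nat \<Rightarrow> complex))
                          \<Rightarrow> (nat \<Rightarrow> complex) \<Rightarrow> (nat \<Rightarrow> complex)" where
  "gamma_act l S x = Wop l (S (Wop (cnj l) x))"

text \<open>The operator int_T gamma_lambda(S) lambda^(-k) dm(lambda), with dm normalized Haar
  measure on the circle (lambda = cis t, dm = dt / (2 pi)), applied to x, coordinate m.\<close>
definition fourier_int :: "((nat \<Rightarrow> complex) \<Rightarrow> (nat \<Rightarrow> complex)) \<Rightarrow> nat
                            \<Rightarrow> (nat \<Rightarrow> complex) \<Rightarrow> (nat \<Rightarrow> complex)" where
  "fourier_int S k x = (\<lambda>m. integral {0..2*pi}
       (\<lambda>t. gamma_act (cis t) S x m * inverse (cis t) ^ k) / complex_of_real (2*pi))"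

definition fcoeff :: "(nat \<Rightarrow> complex) \<Rightarrow> ((nat \<Rightarrow> complex) \<Rightarrow> (nat \<Rightarrow> complex)) \<Rightarrow> nat \<Rightarrow> complex" where
  "fcoeff a S k = (THE c. \<forall>x\<in>l2. fourier_int S k x = (\<lambda>m. c * (wshift a ^^ k) x m))"

end

theory Submission
  imports Defs
begin


lemma int_cis:
  fixes n :: int
  shows "((\<lambda>t. cis (of_int n * t)) has_integral (if n = 0 then complex_of_real (2*pi) else 0)) {0..2*pi}"
proof (cases "n = 0")
  case True
  then show ?thesis using has_integral_const_real[of "1::complex" 0 "2*pi"]
    by (simp add: scaleR_conv_of_real)
next
  case False
  have d: "((\<lambda>t. cis (of_int n * t) / (\<i> * of_int n)) has_vector_derivative cis (of_int n * t)) (at t within {0..2*pi})" for t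
  proof -
    have "((\<lambda>t. cis (of_int n * t)) has_derivative (\<lambda>h. (of_int n * h) *\<^sub>R (\<i> * cis (of_int n * t)))) (at t within {0..2*pi})"
      by (intro derivative_eq_intros) auto
    then have "((\<lambda>t. cis (of_int n * t)) has_vector_derivative (\<i> * of_int n * cis (of_int n * t))) (at t within {0..2*pi})"
      unfolding has_vector_derivative_def by (simp add: scaleR_conv_of_real algebra_simps)
    then have "((\<lambda>t. cis (of_int n * t) / (\<i> * of_int n)) has_vector_derivative (\<i> * of_int n * cis (of_int n * t)) / (\<i> * of_int n)) (at t within {0..2*pi})"
      by (rule has_vector_derivative_divide)
    then show ?thesis using False by simp
  qed
  have "((\<lambda>t. cis (of_int n * t)) has_integral (cis (of_int n * (2*pi)) / (\<i> * of_int n) - cis (of_int n * 0) / (\<i> * of_int n))) {0..2*pi}"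
    by (rule fundamental_theorem_of_calculus) (use d in auto)
  moreover have "cis (of_int n * (2*pi)) = 1"
    using cis_multiple_2pi[of "of_int n"] by (simp add: mult.commute mult.left_commute)
  ultimately show ?thesis using False by simp
qed



lemma l2_bound:
  assumes "\<And>M. (\<Sum>m<M. (cmod (y m))\<^sup>2) \<le> B\<^sup>2" "0 \<le> B"
  shows "y \<in> l2" "l2norm y \<le> B"
proof -
  have s: "summable (\<lambda>m. (cmod (y m))\<^sup>2)"
    by (rule summableI_nonneg_bounded[where x="B\<^sup>2"]) (use assms in auto)
  then show "y \<in> l2" by (simp add: l2_def)
  have "(\<Sum>m. (cmod (y m))\<^sup>2) \<le> B\<^sup>2"
    by (rule suminf_le_const[OF s]) (use assms in auto)
  then have "sqrt (\<Sum>m. (cmod (y m))\<^sup>2) \<le> sqrt (B\<^sup>2)" by (rule real_sqrt_le_mono)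
  then show "l2norm y \<le> B" using assms(2) by (simp add: l2norm_def)
qed

lemma l2_sq: "y \<in> l2 \<Longrightarrow> (l2norm y)\<^sup>2 = (\<Sum>m. (cmod (y m))\<^sup>2)"
  unfolding l2_def l2norm_def by (simp add: suminf_nonneg)

lemma l2_nonneg: "y \<in> l2 \<Longrightarrow> 0 \<le> l2norm y"
  unfolding l2_def l2norm_def by (simp add: suminf_nonneg)

lemma l2_partial: assumes "y \<in> l2" "finite A" shows "(\<Sum>m\<in>A. (cmod (y m))\<^sup>2) \<le> (l2norm y)\<^sup>2"
  using assms by (simp add: l2_sq) (rule sum_le_suminf, auto simp: l2_def)

lemma l2_coord: "y \<in> l2 \<Longrightarrow> cmod (y m) \<le> l2norm y"
proof -
  assume y: "y \<in> l2"
  have "(cmod (y m))\<^sup>2 \<le> (l2norm y)\<^sup>2" using l2_partial[OF y, of "{m}"] by simp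
  then show ?thesis using l2_nonneg[OF y] by (meson abs_le_square_iff abs_of_nonneg norm_ge_zero order.trans power2_le_imp_le)
qed

lemma l2_lin:
  assumes "x \<in> l2" "y \<in> l2"
  shows "(\<lambda>n. x n + c * y n) \<in> l2" "l2norm (\<lambda>n. x n + c * y n) \<le> l2norm x + cmod c * l2norm y"
proof -
  have B: "(\<Sum>m<M. (cmod (x m + c * y m))\<^sup>2) \<le> (l2norm x + cmod c * l2norm y)\<^sup>2" for M
  proof -
    have e: "(\<Sum>m<M. (cmod (x m + c * y m))\<^sup>2) = (L2_set (\<lambda>m. cmod (x m + c * y m)) {..<M})\<^sup>2"
      by (simp add: L2_set_def sum_nonneg)
    have "L2_set (\<lambda>m. cmod (x m + c * y m)) {..<M} \<le> L2_set (\<lambda>m. cmod (x m) + cmod c * cmod (y m)) {..<M}"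
      by (rule L2_set_mono) (auto intro: order.trans[OF norm_triangle_ineq] simp: norm_mult)
    also have "\<dots> \<le> L2_set (\<lambda>m. cmod (x m)) {..<M} + L2_set (\<lambda>m. cmod c * cmod (y m)) {..<M}"
      by (rule L2_set_triangle_ineq)
    also have "L2_set (\<lambda>m. cmod c * cmod (y m)) {..<M} = cmod c * L2_set (\<lambda>m. cmod (y m)) {..<M}"
      by (simp add: L2_set_right_distrib)
    also have "L2_set (\<lambda>m. cmod (x m)) {..<M} \<le> l2norm x"
      unfolding L2_set_def using l2_partial[OF assms(1), of "{..<M}"] l2_nonneg[OF assms(1)]
      by (simp add: real_le_lsqrt sum_nonneg)
    also have "cmod c * L2_set (\<lambda>m. cmod (y m)) {..<M} \<le> cmod c * l2norm y"
      unfolding L2_set_def using l2_partial[OF assms(2), of "{..<M}"] l2_nonneg[OF assms(2)]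
      by (intro mult_left_mono) (simp_all add: real_le_lsqrt sum_nonneg)
    finally have "L2_set (\<lambda>m. cmod (x m + c * y m)) {..<M} \<le> l2norm x + cmod c * l2norm y" by simp
    then show ?thesis unfolding e by (simp add: L2_set_nonneg power_mono)
  qed
  have "0 \<le> l2norm x + cmod c * l2norm y" using l2_nonneg assms by auto
  then show "(\<lambda>n. x n + c * y n) \<in> l2" "l2norm (\<lambda>n. x n + c * y n) \<le> l2norm x + cmod c * l2norm y"
    using l2_bound[OF B] by auto
qed

lemma l2_scale:
  assumes "y \<in> l2" shows "(\<lambda>n. c * y n) \<in> l2" "l2norm (\<lambda>n. c * y n) = cmod c * l2norm y"
proof -
  have s: "summable (\<lambda>n. (cmod (y n))\<^sup>2)" using assms by (simp add: l2_def)
  have e: "(\<lambda>n. (cmod (c * y n))\<^sup>2) = (\<lambda>n. (cmod c)\<^sup>2 * (cmod (y n))\<^sup>2)"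
    by (simp add: norm_mult power_mult_distrib)
  show "(\<lambda>n. c * y n) \<in> l2" unfolding l2_def mem_Collect_eq by (subst e) (rule summable_mult[OF s])
  have "l2norm (\<lambda>n. c * y n) = sqrt ((cmod c)\<^sup>2 * (\<Sum>n. (cmod (y n))\<^sup>2))"
    unfolding l2norm_def e using suminf_mult[OF s] by simp
  then show "l2norm (\<lambda>n. c * y n) = cmod c * l2norm y"
    by (simp add: l2norm_def real_sqrt_mult)
qed

lemma l2_zero: "(\<lambda>n. 0) \<in> l2" "l2norm (\<lambda>n. 0) = 0"
  by (auto simp: l2_def l2norm_def)

lemma l2_norm0: "y \<in> l2 \<Longrightarrow> l2norm y = 0 \<Longrightarrow> y = (\<lambda>n. 0)"
  using l2_coord by (metis antisym norm_ge_zero norm_le_zero_iff ext)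

lemma l2_unitvec: "unitvec n \<in> l2" "l2norm (unitvec n) = 1"
proof -
  have "(\<lambda>m. (cmod (unitvec n m))\<^sup>2) = (\<lambda>m. if m = n then 1 else 0)"
    by (auto simp: unitvec_def)
  moreover have "(\<lambda>m. if m = n then 1 else 0::real) sums 1"
    using sums_single[of n "\<lambda>_. 1::real"] by simp
  ultimately show "unitvec n \<in> l2" "l2norm (unitvec n) = 1"
    by (auto simp: l2_def l2norm_def sums_iff)
qed

lemma l2_Wop: assumes "y \<in> l2" "cmod l = 1" shows "Wop l y \<in> l2" "l2norm (Wop l y) = l2norm y"
proof -
  have "(\<lambda>n. (cmod (Wop l y n))\<^sup>2) = (\<lambda>n. (cmod (y n))\<^sup>2)"
    using assms by (simp add: Wop_def norm_mult norm_power)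
  then show "Wop l y \<in> l2" "l2norm (Wop l y) = l2norm y" using assms
    by (auto simp: l2_def l2norm_def)
qed



definition wt :: "(nat \<Rightarrow> complex) \<Rightarrow> nat \<Rightarrow> nat \<Rightarrow> complex" where
  "wt a k j = (\<Prod>i<k. a (j + i))"

definition beta :: "(nat \<Rightarrow> complex) \<Rightarrow> nat \<Rightarrow> real" where
  "beta a k = (\<Prod>i<k. cmod (a i))"

lemma Tk: "(wshift a ^^ k) x m = (if k \<le> m then wt a k (m - k) * x (m - k) else 0)"
proof (induction k arbitrary: m)
  case 0
  then show ?case by (simp add: wt_def)
next
  case (Suc k)
  show ?case
  proof (cases "Suc k \<le> m")
    case True
    then have "m - Suc k + k = m - 1" by simp
    moreover have "m - 1 - k = m - Suc k" by simp
    moreover have "m \<noteq> 0" using True by simp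
    moreover have "wt a (Suc k) (m - Suc k) = wt a k (m - Suc k) * a (m - 1)"
      unfolding wt_def prod.lessThan_Suc using \<open>m - Suc k + k = m - 1\<close> by simp
    ultimately show ?thesis using True Suc.IH[of "m - 1"]
      by (simp add: wshift_def)
  next
    case False
    then show ?thesis using Suc by (auto simp: wshift_def)
  qed
qed

lemma wt_bound:
  assumes dec: "\<forall>n. cmod (a (Suc n)) \<le> cmod (a n)" and k: "1 \<le> k"
  shows "cmod (wt a k j) * cmod (a 0) \<le> cmod (a j) * beta a k"
proof -
  obtain k' where k': "k = Suc k'" using k by (cases k) auto
  have d: "decseq (\<lambda>n. cmod (a n))" using dec by (intro decseq_SucI) auto
  have "cmod (wt a k j) = cmod (a j) * (\<Prod>i<k'. cmod (a (j + Suc i)))"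
    unfolding wt_def k' prod.lessThan_Suc_shift by (simp add: norm_mult prod_norm)
  also have "(\<Prod>i<k'. cmod (a (j + Suc i))) \<le> (\<Prod>i<k'. cmod (a (Suc i)))"
    by (intro prod_mono) (auto intro: decseqD[OF d])
  finally have "cmod (wt a k j) \<le> cmod (a j) * (\<Prod>i<k'. cmod (a (Suc i)))"
    by (simp add: mult_left_mono)
  moreover have "beta a k = cmod (a 0) * (\<Prod>i<k'. cmod (a (Suc i)))"
    unfolding beta_def k' prod.lessThan_Suc_shift by simp
  ultimately show ?thesis
    using mult_right_mono[OF \<open>cmod (wt a k j) \<le> _\<close>, of "cmod (a 0)"] by (simp add: mult_ac)
qed

lemma shift_sum: fixes f :: "nat \<Rightarrow> real" and M k :: nat shows "(\<Sum>m<M. if k \<le> m then f (m - k) else 0) = (\<Sum>j<M - k. f j)"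
  apply (induction M) apply simp apply (simp add: Suc_diff_le) done

lemma sum_rev_le:
  fixes h :: "nat \<Rightarrow> real"
  assumes "\<And>j. 0 \<le> h j"
  shows "(\<Sum>k=1..n. if k \<le> m then h (m - k) else 0) \<le> (\<Sum>j<Suc m. h j)"
proof -
  have "(\<Sum>k=1..n. if k \<le> m then h (m - k) else 0) = (\<Sum>k\<in>{1..n} \<inter> {..m}. h (m - k))"
    by (rule sum.inter_filter[symmetric, THEN trans]) (auto intro!: sum.cong)
  also have "\<dots> \<le> (\<Sum>k\<in>{..<Suc m}. h (m - k))"
    by (rule sum_mono2) (auto simp: assms)
  also have "\<dots> = (\<Sum>j<Suc m. h j)"
    using sum.nat_diff_reindex[of "\<lambda>j. h j" "Suc m"] by simp
  finally show ?thesis .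
qed



lemma cs_sq:
  fixes f g :: "nat \<Rightarrow> real"
  assumes "finite A"
  shows "(\<Sum>i\<in>A. \<bar>f i\<bar> * \<bar>g i\<bar>)\<^sup>2 \<le> (\<Sum>i\<in>A. (f i)\<^sup>2) * (\<Sum>i\<in>A. (g i)\<^sup>2)"
proof -
  have "(\<Sum>i\<in>A. \<bar>f i\<bar> * \<bar>g i\<bar>)\<^sup>2 \<le> (L2_set f A * L2_set g A)\<^sup>2"
    by (rule power_mono[OF L2_set_mult_ineq]) (auto intro: sum_nonneg)
  also have "\<dots> = (\<Sum>i\<in>A. (f i)\<^sup>2) * (\<Sum>i\<in>A. (g i)\<^sup>2)"
    by (simp add: L2_set_def power_mult_distrib sum_nonneg)
  finally show ?thesis .
qed

lemma hs:
  assumes a0: "a 0 \<noteq> 0" and dec: "\<forall>n. cmod (a (Suc n)) \<le> cmod (a n)"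
    and sa: "summable (\<lambda>n. (cmod (a n))\<^sup>2)" and x: "x \<in> l2"
  shows "(\<lambda>m. \<Sum>k=1..n. d k * (wshift a ^^ k) x m) \<in> l2"
    "l2norm (\<lambda>m. \<Sum>k=1..n. d k * (wshift a ^^ k) x m)
       \<le> sqrt (\<Sum>j. (cmod (a j))\<^sup>2) / cmod (a 0) * sqrt (\<Sum>k=1..n. (cmod (d k))\<^sup>2 * (beta a k)\<^sup>2) * l2norm x"
proof -
  define P where "P = (\<lambda>m. \<Sum>k=1..n. d k * (wshift a ^^ k) x m)"
  define X where "X = (l2norm x)\<^sup>2"
  define A where "A = (\<Sum>j. (cmod (a j))\<^sup>2)"
  define D where "D = (\<Sum>k=1..n. (cmod (d k))\<^sup>2 * (beta a k)\<^sup>2)"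
  define c0 where "c0 = (cmod (a 0))\<^sup>2"
  have c0: "c0 > 0" using a0 by (simp add: c0_def)
  have A0: "0 \<le> A" unfolding A_def by (rule suminf_nonneg[OF sa]) simp
  have D0: "0 \<le> D" unfolding D_def by (rule sum_nonneg) simp
  have X0: "0 \<le> X" unfolding X_def by simp
  have row: "(cmod (P m))\<^sup>2 \<le> (\<Sum>k=1..n. if k \<le> m then (cmod (d k))\<^sup>2 * (beta a k)\<^sup>2 * (cmod (a (m - k)))\<^sup>2 / c0 else 0) * X" for m
  proof -
    define f where "f = (\<lambda>k. if k \<le> m then cmod (d k * wt a k (m - k)) else 0)"
    define g where "g = (\<lambda>k. if k \<le> m then cmod (x (m - k)) else 0)"
    have "cmod (P m) = cmod (\<Sum>k=1..n. if k \<le> m then d k * wt a k (m - k) * x (m - k) else 0)"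
      unfolding P_def Tk by (intro arg_cong[where f=cmod] sum.cong) auto
    also have "\<dots> \<le> (\<Sum>k=1..n. cmod (if k \<le> m then d k * wt a k (m - k) * x (m - k) else 0))"
      by (rule norm_sum)
    also have "\<dots> = (\<Sum>k=1..n. \<bar>f k\<bar> * \<bar>g k\<bar>)"
      by (rule sum.cong) (auto simp: f_def g_def norm_mult)
    finally have "(cmod (P m))\<^sup>2 \<le> (\<Sum>k=1..n. \<bar>f k\<bar> * \<bar>g k\<bar>)\<^sup>2"
      by (simp add: power_mono)
    also have "\<dots> \<le> (\<Sum>k=1..n. (f k)\<^sup>2) * (\<Sum>k=1..n. (g k)\<^sup>2)"
      by (rule cs_sq) simp
    also have "(\<Sum>k=1..n. (g k)\<^sup>2) \<le> X"
    proof -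
      have "(\<Sum>k=1..n. (g k)\<^sup>2) = (\<Sum>k=1..n. if k \<le> m then (cmod (x (m - k)))\<^sup>2 else 0)"
        by (rule sum.cong) (auto simp: g_def)
      also have "\<dots> \<le> (\<Sum>j<Suc m. (cmod (x j))\<^sup>2)"
        by (rule sum_rev_le) simp
      also have "\<dots> \<le> X" unfolding X_def by (rule l2_partial[OF x]) simp
      finally show ?thesis .
    qed
    then have "(\<Sum>k=1..n. (f k)\<^sup>2) * (\<Sum>k=1..n. (g k)\<^sup>2) \<le> (\<Sum>k=1..n. (f k)\<^sup>2) * X"
      by (intro mult_left_mono) (auto intro: sum_nonneg)
    also have "(\<Sum>k=1..n. (f k)\<^sup>2) \<le> (\<Sum>k=1..n. if k \<le> m then (cmod (d k))\<^sup>2 * (beta a k)\<^sup>2 * (cmod (a (m - k)))\<^sup>2 / c0 else 0)"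
    proof (rule sum_mono)
      fix k assume k: "k \<in> {1..n}"
      show "(f k)\<^sup>2 \<le> (if k \<le> m then (cmod (d k))\<^sup>2 * (beta a k)\<^sup>2 * (cmod (a (m - k)))\<^sup>2 / c0 else 0)"
      proof (cases "k \<le> m")
        case True
        have wb: "cmod (wt a k (m - k)) * cmod (a 0) \<le> cmod (a (m - k)) * beta a k"
          by (rule wt_bound[OF dec]) (use k in auto)
        have "(cmod (wt a k (m - k)))\<^sup>2 * c0 \<le> (cmod (a (m - k)))\<^sup>2 * (beta a k)\<^sup>2"
          using power_mono[OF wb, of 2] by (simp add: c0_def power_mult_distrib)
        then have "(cmod (wt a k (m - k)))\<^sup>2 \<le> (cmod (a (m - k)))\<^sup>2 * (beta a k)\<^sup>2 / c0"
          using c0 by (simp add: field_simps)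
        then have "(cmod (d k))\<^sup>2 * (cmod (wt a k (m - k)))\<^sup>2 \<le> (cmod (d k))\<^sup>2 * ((cmod (a (m - k)))\<^sup>2 * (beta a k)\<^sup>2 / c0)"
          by (rule mult_left_mono) simp
        then show ?thesis using True by (simp add: f_def norm_mult power_mult_distrib mult_ac)
      qed (simp add: f_def)
    qed
    then have "(\<Sum>k=1..n. (f k)\<^sup>2) * X \<le> (\<Sum>k=1..n. if k \<le> m then (cmod (d k))\<^sup>2 * (beta a k)\<^sup>2 * (cmod (a (m - k)))\<^sup>2 / c0 else 0) * X"
      using X0 by (rule mult_right_mono)
    finally show ?thesis .
  qed
  have tot: "(\<Sum>m<M. (cmod (P m))\<^sup>2) \<le> (sqrt A / cmod (a 0) * sqrt D * l2norm x)\<^sup>2" for M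
  proof -
    have "(\<Sum>m<M. (cmod (P m))\<^sup>2) \<le> (\<Sum>m<M. (\<Sum>k=1..n. if k \<le> m then (cmod (d k))\<^sup>2 * (beta a k)\<^sup>2 * (cmod (a (m - k)))\<^sup>2 / c0 else 0) * X)"
      by (rule sum_mono) (rule row)
    also have "\<dots> = (\<Sum>k=1..n. (cmod (d k))\<^sup>2 * (beta a k)\<^sup>2 / c0 * (\<Sum>m<M. if k \<le> m then (cmod (a (m - k)))\<^sup>2 else 0)) * X"
      unfolding sum_distrib_right[symmetric] sum_distrib_left
      by (subst sum.swap) (auto intro!: sum.cong)
    also have "\<dots> \<le> (\<Sum>k=1..n. (cmod (d k))\<^sup>2 * (beta a k)\<^sup>2 / c0 * A) * X"
    proof (intro mult_right_mono sum_mono mult_left_mono X0)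
      fix k
      have "(\<Sum>m<M. if k \<le> m then (cmod (a (m - k)))\<^sup>2 else 0) = (\<Sum>j<M - k. (cmod (a j))\<^sup>2)"
        by (rule shift_sum)
      also have "\<dots> \<le> A" unfolding A_def by (rule sum_le_suminf[OF sa]) auto
      finally show "(\<Sum>m<M. if k \<le> m then (cmod (a (m - k)))\<^sup>2 else 0) \<le> A" .
      show "0 \<le> (cmod (d k))\<^sup>2 * (beta a k)\<^sup>2 / c0" using c0 by simp
    qed
    also have "\<dots> = (sqrt A / cmod (a 0) * sqrt D * l2norm x)\<^sup>2"
      using A0 D0 c0 l2_nonneg[OF x]
      by (simp add: D_def X_def c0_def power_mult_distrib power_divide sum_distrib_right[symmetric] sum_divide_distrib[symmetric] field_simps sum_distrib_left)
    finally show ?thesis .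
  qed
  have B0: "0 \<le> sqrt A / cmod (a 0) * sqrt D * l2norm x"
    using l2_nonneg[OF x] A0 D0 by (simp add: divide_nonneg_pos)
  show "(\<lambda>m. \<Sum>k=1..n. d k * (wshift a ^^ k) x m) \<in> l2"
    using l2_bound(1)[OF tot B0] by (simp add: P_def)
  show "l2norm (\<lambda>m. \<Sum>k=1..n. d k * (wshift a ^^ k) x m)
       \<le> sqrt (\<Sum>j. (cmod (a j))\<^sup>2) / cmod (a 0) * sqrt (\<Sum>k=1..n. (cmod (d k))\<^sup>2 * (beta a k)\<^sup>2) * l2norm x"
    using l2_bound(2)[OF tot B0] by (simp add: P_def A_def D_def)
qed



lemma bop_lin: "bounded_op Q \<Longrightarrow> x \<in> l2 \<Longrightarrow> y \<in> l2 \<Longrightarrow> Q (\<lambda>n. x n + c * y n) = (\<lambda>n. Q x n + c * Q y n)"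
  unfolding bounded_op_def by blast

lemma bop_zero: "bounded_op Q \<Longrightarrow> Q (\<lambda>n. 0) = (\<lambda>n. 0)"
proof -
  assume b: "bounded_op Q"
  have "Q (\<lambda>n. 0 + 1 * 0) = (\<lambda>n. Q (\<lambda>n. 0) n + 1 * Q (\<lambda>n. 0) n)"
    using bop_lin[OF b l2_zero(1) l2_zero(1), of 1] by simp
  then have "\<And>n. Q (\<lambda>n. 0) n = Q (\<lambda>n. 0) n + Q (\<lambda>n. 0) n" by (metis add_0 mult_1 mult_zero_left)
  then show ?thesis by auto
qed

lemma bop_scale: "bounded_op Q \<Longrightarrow> x \<in> l2 \<Longrightarrow> Q (\<lambda>n. c * x n) = (\<lambda>n. c * Q x n)"
proof -
  assume b: "bounded_op Q" and x: "x \<in> l2"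
  have "Q (\<lambda>n. 0 + c * x n) = (\<lambda>n. Q (\<lambda>n. 0) n + c * Q x n)"
    using bop_lin[OF b l2_zero(1) x, of c] by simp
  then show ?thesis using bop_zero[OF b] by simp
qed

lemma bop_l2: "bounded_op Q \<Longrightarrow> x \<in> l2 \<Longrightarrow> Q x \<in> l2"
  unfolding bounded_op_def by blast

lemma opnorm_bound:
  assumes b: "bounded_op Q" and x: "x \<in> l2"
  shows "l2norm (Q x) \<le> opnorm Q * l2norm x"
proof -
  obtain C where C: "\<forall>x\<in>l2. l2norm (Q x) \<le> C * l2norm x" using b unfolding bounded_op_def by blast
  have bdd: "bdd_above {l2norm (Q x) | x. x \<in> l2 \<and> l2norm x \<le> 1}"
  proof (rule bdd_aboveI[where M="\<bar>C\<bar>"])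
    fix r assume "r \<in> {l2norm (Q x) | x. x \<in> l2 \<and> l2norm x \<le> 1}"
    then obtain y where y: "y \<in> l2" "l2norm y \<le> 1" "r = l2norm (Q y)" by blast
    have "C * l2norm y \<le> \<bar>C\<bar> * l2norm y" using l2_nonneg[OF y(1)] by (simp add: mult_right_mono)
    also have "\<dots> \<le> \<bar>C\<bar>" using y(2) by (simp add: mult_left_le)
    finally show "r \<le> \<bar>C\<bar>" using C y by force
  qed
  show ?thesis
  proof (cases "l2norm x = 0")
    case True
    then have "x = (\<lambda>n. 0)" using l2_norm0[OF x] by simp
    then show ?thesis using bop_zero[OF b] l2_zero True by simp
  next
    case False
    define r where "r = l2norm x"
    have r: "r > 0" using False l2_nonneg[OF x] by (simp add: r_def)
    define z where "z = (\<lambda>n. complex_of_real (1/r) * x n)"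
    have z: "z \<in> l2" "l2norm z = 1" using l2_scale[OF x, of "complex_of_real (1/r)"] r
      by (auto simp: z_def r_def norm_divide)
    have "Q z = (\<lambda>n. complex_of_real (1/r) * Q x n)" unfolding z_def by (rule bop_scale[OF b x])
    then have "l2norm (Q z) = l2norm (Q x) / r" using l2_scale[OF bop_l2[OF b x], of "complex_of_real (1/r)"] r
      by (simp add: norm_divide)
    moreover have "l2norm (Q z) \<le> opnorm Q"
      unfolding opnorm_def by (rule cSup_upper[OF _ bdd]) (use z in auto)
    ultimately show ?thesis using r by (simp add: r_def field_simps)
  qed
qed

lemma opnorm_le:
  assumes "\<forall>x\<in>l2. Q x \<in> l2" "\<forall>x\<in>l2. l2norm x \<le> 1 \<longrightarrow> l2norm (Q x) \<le> B"
  shows "0 \<le> opnorm Q" "opnorm Q \<le> B"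
proof -
  have ne: "{l2norm (Q x) | x. x \<in> l2 \<and> l2norm x \<le> 1} \<noteq> {}" using l2_zero by auto
  have bdd: "bdd_above {l2norm (Q x) | x. x \<in> l2 \<and> l2norm x \<le> 1}"
    by (rule bdd_aboveI[where M=B]) (use assms in auto)
  show "opnorm Q \<le> B" unfolding opnorm_def by (rule cSup_least[OF ne]) (use assms in auto)
  have "l2norm (Q (\<lambda>n. 0)) \<le> opnorm Q"
    unfolding opnorm_def by (rule cSup_upper[OF _ bdd]) (use l2_zero in auto)
  moreover have "0 \<le> l2norm (Q (\<lambda>n. 0))" using assms(1) l2_zero by (simp add: l2_nonneg)
  ultimately show "0 \<le> opnorm Q" by simp
qed

lemma polyop_lin: "polyop a c N (\<lambda>n. x n + e * y n) = (\<lambda>m. polyop a c N x m + e * polyop a c N y m)"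
  unfolding polyop_def Tk by (auto simp: sum_distrib_left sum.distrib[symmetric] algebra_simps intro!: sum.cong)

lemma polyop_bounded:
  assumes a0: "a 0 \<noteq> 0" and dec: "\<forall>n. cmod (a (Suc n)) \<le> cmod (a n)"
    and sa: "summable (\<lambda>n. (cmod (a n))\<^sup>2)"
  shows "bounded_op (polyop a c N)"
  unfolding bounded_op_def
proof (intro conjI ballI allI exI)
  fix x assume "x \<in> l2" then show "polyop a c N x \<in> l2"
    using hs(1)[OF a0 dec sa] unfolding polyop_def by blast
next
  fix x y e show "polyop a c N (\<lambda>n. x n + e * y n) = (\<lambda>n. polyop a c N x n + e * polyop a c N y n)"
    by (rule polyop_lin)
next
  fix x assume "x \<in> l2" then show "l2norm (polyop a c N x) \<le> (sqrt (\<Sum>j. (cmod (a j))\<^sup>2) / cmod (a 0) * sqrt (\<Sum>k=1..N. (cmod (c k))\<^sup>2 * (beta a k)\<^sup>2)) * l2norm x"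
    using hs(2)[OF a0 dec sa] unfolding polyop_def by blast
qed

lemma bop_diff:
  assumes "bounded_op S" "bounded_op Q"
  shows "bounded_op (\<lambda>x m. S x m - Q x m)"
  unfolding bounded_op_def
proof (intro conjI ballI allI)
  fix x assume x: "x \<in> l2"
  have "(\<lambda>n. S x n + (-1) * Q x n) \<in> l2" using l2_lin(1)[OF bop_l2[OF assms(1) x] bop_l2[OF assms(2) x]] .
  then show "(\<lambda>m. S x m - Q x m) \<in> l2" by simp
next
  fix x y e assume "x \<in> l2" "y \<in> l2"
  then show "(\<lambda>m. S (\<lambda>n. x n + e * y n) m - Q (\<lambda>n. x n + e * y n) m) = (\<lambda>n. (\<lambda>m. S x m - Q x m) n + e * (\<lambda>m. S y m - Q y m) n)"
    using assms unfolding bounded_op_def by (auto simp: algebra_simps)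
next
  obtain C1 where C1: "\<forall>x\<in>l2. l2norm (S x) \<le> C1 * l2norm x" using assms(1) unfolding bounded_op_def by blast
  obtain C2 where C2: "\<forall>x\<in>l2. l2norm (Q x) \<le> C2 * l2norm x" using assms(2) unfolding bounded_op_def by blast
  show "\<exists>C. \<forall>x\<in>l2. l2norm (\<lambda>m. S x m - Q x m) \<le> C * l2norm x"
  proof (intro exI ballI)
    fix x assume x: "x \<in> l2"
    have "l2norm (\<lambda>n. S x n + (-1) * Q x n) \<le> l2norm (S x) + cmod (-1) * l2norm (Q x)"
      using l2_lin(2)[OF bop_l2[OF assms(1) x] bop_l2[OF assms(2) x]] .
    moreover have "(\<lambda>n. S x n + (-1) * Q x n) = (\<lambda>m. S x m - Q x m)" by simp
    moreover have "l2norm (S x) \<le> C1 * l2norm x" "l2norm (Q x) \<le> C2 * l2norm x" using C1 C2 x by auto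
    ultimately show "l2norm (\<lambda>m. S x m - Q x m) \<le> (C1 + C2) * l2norm x"
      by (simp add: algebra_simps)
  qed
qed



definition cp :: "(nat \<Rightarrow> complex) \<Rightarrow> nat \<Rightarrow> nat \<Rightarrow> complex" where
  "cp c N k = (if 1 \<le> k \<and> k \<le> N then c k else 0)"

lemma gamma_poly:
  "gamma_act (cis t) (polyop a c N) x m * inverse (cis t) ^ k
     = (\<Sum>j=1..N. c j * (wshift a ^^ j) x m * cis (of_int (int j - int k) * t))"
proof -
  have "gamma_act (cis t) (polyop a c N) x m = (\<Sum>j=1..N. c j * (wshift a ^^ j) x m * cis (real j * t))"
    unfolding gamma_act_def Wop_def polyop_def Tk sum_distrib_left
  proof (rule sum.cong[OF refl])
    fix j assume "j \<in> {1..N}"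
    show "cis t ^ m * (c j * (if j \<le> m then wt a j (m - j) * (cnj (cis t) ^ (m - j) * x (m - j)) else 0))
        = c j * (if j \<le> m then wt a j (m - j) * x (m - j) else 0) * cis (real j * t)"
    proof (cases "j \<le> m")
      case True
      have "cis t ^ m * cnj (cis t) ^ (m - j) = cis (real j * t)"
        unfolding cis_cnj Complex.DeMoivre cis_mult using True by (intro arg_cong[where f=cis]) (simp add: of_nat_diff algebra_simps)
      then show ?thesis using True
        by (simp add: algebra_simps)
    qed simp
  qed
  moreover have "inverse (cis t) ^ k = cis (- (real k * t))" by (simp add: Complex.DeMoivre)
  moreover have "cis (real j * t) * cis (- (real k * t)) = cis (of_int (int j - int k) * t)" for j
    by (simp add: cis_mult algebra_simps)
  ultimately show ?thesis
    by (simp add: sum_distrib_right mult.assoc)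
qed

lemma poly_integral:
  "((\<lambda>t. gamma_act (cis t) (polyop a c N) x m * inverse (cis t) ^ k) has_integral
      (complex_of_real (2*pi) * (cp c N k * (wshift a ^^ k) x m))) {0..2*pi}"
proof -
  have "((\<lambda>t. \<Sum>j=1..N. c j * (wshift a ^^ j) x m * cis (of_int (int j - int k) * t)) has_integral
        (\<Sum>j=1..N. c j * (wshift a ^^ j) x m * (if int j - int k = 0 then complex_of_real (2*pi) else 0))) {0..2*pi}"
    by (intro has_integral_sum has_integral_mult_right int_cis) auto
  moreover have "(\<Sum>j=1..N. c j * (wshift a ^^ j) x m * (if int j - int k = 0 then complex_of_real (2*pi) else 0))
      = complex_of_real (2*pi) * (cp c N k * (wshift a ^^ k) x m)"
    unfolding cp_def by (simp add: if_distrib sum.delta' cong: if_cong)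
  ultimately show ?thesis unfolding gamma_poly by simp
qed



lemma opnorm_nonneg: "bounded_op Q \<Longrightarrow> 0 \<le> opnorm Q"
  using opnorm_bound[of Q "unitvec 0"] l2_unitvec l2_nonneg[OF bop_l2[of Q "unitvec 0"]]
  by fastforce

lemma gamma_diff_bound:
  assumes bS: "bounded_op S" and bP: "bounded_op P" and x: "x \<in> l2"
  shows "cmod (gamma_act (cis t) S x m * inverse (cis t) ^ k - gamma_act (cis t) P x m * inverse (cis t) ^ k)
         \<le> opnorm (\<lambda>x m. S x m - P x m) * l2norm x"
proof -
  define w where "w = Wop (cnj (cis t)) x"
  have w: "w \<in> l2" "l2norm w = l2norm x" using l2_Wop[OF x, of "cnj (cis t)"] by (auto simp: w_def)
  have bQ: "bounded_op (\<lambda>x m. S x m - P x m)" by (rule bop_diff[OF bS bP])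
  have "cmod (gamma_act (cis t) S x m * inverse (cis t) ^ k - gamma_act (cis t) P x m * inverse (cis t) ^ k)
      = cmod ((\<lambda>m. S w m - P w m) m)"
    unfolding gamma_act_def w_def
    by (simp add: Wop_def right_diff_distrib[symmetric] left_diff_distrib[symmetric] norm_mult norm_power)
  also have "\<dots> \<le> l2norm (\<lambda>m. S w m - P w m)"
    by (rule l2_coord) (rule bop_l2[OF bQ w(1)])
  also have "\<dots> \<le> opnorm (\<lambda>x m. S x m - P x m) * l2norm w"
    using opnorm_bound[OF bQ w(1)] by simp
  finally show ?thesis using w by simp
qed

locale setting =
  fixes a :: "nat \<Rightarrow> complex" and S :: "(nat \<Rightarrow> complex) \<Rightarrow> (nat \<Rightarrow> complex)"
  assumes anz: "\<forall>n. a n \<noteq> 0"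
    and dec: "\<forall>n. cmod (a (Suc n)) \<le> cmod (a n)"
    and sa: "summable (\<lambda>n. (cmod (a n))\<^sup>2)"
    and SA: "S \<in> alg_T a"
begin

lemma a0: "a 0 \<noteq> 0" using anz by simp

lemma bS: "bounded_op S" using SA by (simp add: alg_T_def)

lemma bP: "bounded_op (polyop a c N)" by (rule polyop_bounded[OF a0 dec sa])

lemma approx: "e > 0 \<Longrightarrow> \<exists>c N. opnorm (\<lambda>x m. S x m - polyop a c N x m) < e"
  using SA by (simp add: alg_T_def)

lemma fS_integrable:
  assumes x: "x \<in> l2"
  shows "(\<lambda>t. gamma_act (cis t) S x m * inverse (cis t) ^ k) integrable_on {0..2*pi}"
proof -
  have "(\<lambda>t. gamma_act (cis t) S x m * inverse (cis t) ^ k) integrable_on cbox 0 (2*pi)"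
  proof (rule integrable_uniform_limit)
    fix e :: real assume e: "e > 0"
    define L where "L = l2norm x"
    have L: "0 \<le> L" using l2_nonneg[OF x] by (simp add: L_def)
    obtain c N where cN: "opnorm (\<lambda>x m. S x m - polyop a c N x m) < e / (L + 1)"
      using approx[of "e / (L + 1)"] e L by auto
    have "opnorm (\<lambda>x m. S x m - polyop a c N x m) * L \<le> e / (L + 1) * L"
      using cN L by (intro mult_right_mono) auto
    also have "\<dots> \<le> e" using e L by (simp add: field_simps)
    finally have B: "opnorm (\<lambda>x m. S x m - polyop a c N x m) * L \<le> e" .
    show "\<exists>g. (\<forall>t\<in>cbox 0 (2*pi). norm (gamma_act (cis t) S x m * inverse (cis t) ^ k - g t) \<le> e) \<and> g integrable_on cbox 0 (2*pi)"
    proof (intro exI conjI ballI)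
      fix t
      show "norm (gamma_act (cis t) S x m * inverse (cis t) ^ k - gamma_act (cis t) (polyop a c N) x m * inverse (cis t) ^ k) \<le> e"
        using gamma_diff_bound[OF bS bP x, of t m k c N] B by (simp add: L_def)
    next
      show "(\<lambda>t. gamma_act (cis t) (polyop a c N) x m * inverse (cis t) ^ k) integrable_on cbox 0 (2*pi)"
        using poly_integral[of a c N x m k] unfolding box_real integrable_on_def by blast
    qed
  qed
  then show ?thesis by simp
qed

lemma fourier_est:
  assumes x: "x \<in> l2"
  shows "cmod (fourier_int S k x m - cp c N k * (wshift a ^^ k) x m) \<le> opnorm (\<lambda>x m. S x m - polyop a c N x m) * l2norm x"
proof -
  define fS where "fS = (\<lambda>t. gamma_act (cis t) S x m * inverse (cis t) ^ k)"
  define fP where "fP = (\<lambda>t. gamma_act (cis t) (polyop a c N) x m * inverse (cis t) ^ k)"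
  define B where "B = opnorm (\<lambda>x m. S x m - polyop a c N x m) * l2norm x"
  have B0: "0 \<le> B" unfolding B_def using opnorm_nonneg[OF bop_diff[OF bS bP]] l2_nonneg[OF x] by simp
  have iS: "fS integrable_on {0..2*pi}" unfolding fS_def by (rule fS_integrable[OF x])
  have iP: "(fP has_integral (complex_of_real (2*pi) * (cp c N k * (wshift a ^^ k) x m))) {0..2*pi}"
    unfolding fP_def by (rule poly_integral)
  have d: "((\<lambda>t. fS t - fP t) has_integral (integral {0..2*pi} fS - complex_of_real (2*pi) * (cp c N k * (wshift a ^^ k) x m))) {0..2*pi}"
    by (rule has_integral_diff[OF integrable_integral[OF iS] iP])
  have "norm (integral {0..2*pi} fS - complex_of_real (2*pi) * (cp c N k * (wshift a ^^ k) x m)) \<le> B * Henstock_Kurzweil_Integration.content (cbox 0 (2*pi))"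
    by (rule has_integral_bound[OF B0]) (use d gamma_diff_bound[OF bS bP x] in \<open>auto simp: fS_def fP_def B_def\<close>)
  then have "norm (integral {0..2*pi} fS - complex_of_real (2*pi) * (cp c N k * (wshift a ^^ k) x m)) \<le> B * (2*pi)"
    by simp
  moreover have "integral {0..2*pi} fS - complex_of_real (2*pi) * (cp c N k * (wshift a ^^ k) x m)
     = complex_of_real (2*pi) * (fourier_int S k x m - cp c N k * (wshift a ^^ k) x m)"
    unfolding fourier_int_def fS_def by (simp add: field_simps)
  ultimately have "2 * pi * cmod (fourier_int S k x m - cp c N k * (wshift a ^^ k) x m) \<le> B * (2 * pi)"
    by (simp add: norm_mult)
  then show ?thesis unfolding B_def[symmetric] by (simp add: mult.commute)
qed

end



lemma small_zero:
  fixes r M :: real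
  assumes "\<And>e. e > 0 \<Longrightarrow> r \<le> e * M" "0 \<le> M"
  shows "r \<le> 0"
proof (rule ccontr)
  assume "\<not> r \<le> 0"
  then have r: "r > 0" by simp
  have "r \<le> r / (2 * (M + 1)) * M" using assms(1)[of "r / (2 * (M + 1))"] r assms(2) by simp
  also have "\<dots> < r" using r assms(2) by (simp add: field_simps) (simp add: add_nonneg_pos)
  finally show False by simp
qed

context setting
begin

definition cS :: "nat \<Rightarrow> complex" where
  "cS k = S (unitvec 0) k / wt a k 0"

lemma wt_nz: "wt a k j \<noteq> 0"
  unfolding wt_def using anz by simp

lemma P_e0: "polyop a c N (unitvec 0) k = cp c N k * wt a k 0"
proof -
  have "polyop a c N (unitvec 0) k = (\<Sum>j=1..N. if j = k then c k * wt a k 0 else 0)"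
    unfolding polyop_def Tk by (rule sum.cong) (auto simp: unitvec_def)
  then show ?thesis by (simp add: cp_def)
qed

lemma T_e0: "(wshift a ^^ k) (unitvec 0) k = wt a k 0"
  by (simp add: Tk unitvec_def)

lemma coef_id: "(cS k - cp c N k) * wt a k 0 = S (unitvec 0) k - polyop a c N (unitvec 0) k"
  unfolding P_e0 cS_def using wt_nz[of k 0] by (simp add: field_simps)

lemma coef_est: "cmod (cS k - cp c N k) * cmod (wt a k 0) \<le> opnorm (\<lambda>x m. S x m - polyop a c N x m)"
proof -
  have bQ: "bounded_op (\<lambda>x m. S x m - polyop a c N x m)" by (rule bop_diff[OF bS bP])
  have "cmod (cS k - cp c N k) * cmod (wt a k 0) = cmod ((\<lambda>m. S (unitvec 0) m - polyop a c N (unitvec 0) m) k)"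
    using coef_id[of k c N] by (metis norm_mult)
  also have "\<dots> \<le> l2norm (\<lambda>m. S (unitvec 0) m - polyop a c N (unitvec 0) m)"
    by (rule l2_coord) (rule bop_l2[OF bQ l2_unitvec(1)])
  also have "\<dots> \<le> opnorm (\<lambda>x m. S x m - polyop a c N x m)"
    using opnorm_bound[OF bQ l2_unitvec(1), of 0] l2_unitvec(2) by simp
  finally show ?thesis .
qed

lemma fourier_char:
  assumes x: "x \<in> l2"
  shows "fourier_int S k x = (\<lambda>m. cS k * (wshift a ^^ k) x m)"
proof
  fix m
  define z where "z = fourier_int S k x m - cS k * (wshift a ^^ k) x m"
  define M where "M = l2norm x + cmod ((wshift a ^^ k) x m) / cmod (wt a k 0)"
  have M: "0 \<le> M" unfolding M_def using l2_nonneg[OF x] by simp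
  have "cmod z \<le> e * M" if e: "e > 0" for e
  proof -
    obtain c N where cN: "opnorm (\<lambda>x m. S x m - polyop a c N x m) < e" using approx[OF e] by blast
    have 1: "cmod (fourier_int S k x m - cp c N k * (wshift a ^^ k) x m) \<le> e * l2norm x"
      using fourier_est[OF x, of k m c N] cN l2_nonneg[OF x]
      by (meson less_eq_real_def mult_right_mono order.trans)
    have "cmod (cS k - cp c N k) * cmod (wt a k 0) \<le> e" using coef_est[of k c N] cN by simp
    then have 2: "cmod (cS k - cp c N k) \<le> e / cmod (wt a k 0)"
      using wt_nz[of k 0] by (simp add: field_simps)
    have "z = (fourier_int S k x m - cp c N k * (wshift a ^^ k) x m) - (cS k - cp c N k) * (wshift a ^^ k) x m"
      unfolding z_def by (simp add: algebra_simps)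
    then have "cmod z \<le> cmod (fourier_int S k x m - cp c N k * (wshift a ^^ k) x m) + cmod (cS k - cp c N k) * cmod ((wshift a ^^ k) x m)"
      by (metis norm_mult norm_triangle_ineq4)
    also have "\<dots> \<le> e * l2norm x + e / cmod (wt a k 0) * cmod ((wshift a ^^ k) x m)"
      using 1 2 by (intro add_mono mult_right_mono) auto
    also have "\<dots> = e * M" unfolding M_def by (simp add: algebra_simps)
    finally show ?thesis .
  qed
  then have "cmod z \<le> 0" using small_zero M by blast
  then show "fourier_int S k x m = cS k * (wshift a ^^ k) x m" unfolding z_def by simp
qed

lemma fcoeff_eq: "fcoeff a S k = cS k"
  unfolding fcoeff_def
proof (rule the_equality)
  show "\<forall>x\<in>l2. fourier_int S k x = (\<lambda>m. cS k * (wshift a ^^ k) x m)" using fourier_char by blast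
next
  fix c assume "\<forall>x\<in>l2. fourier_int S k x = (\<lambda>m. c * (wshift a ^^ k) x m)"
  then have "fourier_int S k (unitvec 0) k = c * wt a k 0" using l2_unitvec(1) T_e0 by auto
  moreover have "fourier_int S k (unitvec 0) k = cS k * wt a k 0" using fourier_char[OF l2_unitvec(1)] T_e0 by auto
  ultimately show "c = cS k" using wt_nz[of k 0] by simp
qed

end



context setting
begin

lemma beta_wt: "beta a k = cmod (wt a k 0)"
  unfolding beta_def wt_def by (simp add: prod_norm)

lemma main:
  "(\<lambda>n. opnorm (\<lambda>x m. S x m - (\<Sum>k=1..n. fcoeff a S k * (wshift a ^^ k) x m))) \<longlonglongrightarrow> 0"
proof (rule LIMSEQ_I)
  fix \<epsilon> :: real assume \<epsilon>: "\<epsilon> > 0"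
  define Kc where "Kc = sqrt (\<Sum>j. (cmod (a j))\<^sup>2) / cmod (a 0)"
  have Kc: "0 \<le> Kc" unfolding Kc_def using suminf_nonneg[OF sa] by simp
  define \<epsilon>' where "\<epsilon>' = \<epsilon> / (2 * (Kc + 1))"
  have \<epsilon>': "\<epsilon>' > 0" using \<epsilon> Kc by (simp add: \<epsilon>'_def)
  obtain c N where cN: "opnorm (\<lambda>x m. S x m - polyop a c N x m) < \<epsilon>'" using approx[OF \<epsilon>'] by blast
  define Q where "Q = (\<lambda>x m. S x m - polyop a c N x m)"
  have bQ: "bounded_op Q" unfolding Q_def by (rule bop_diff[OF bS bP])
  have oQ: "0 \<le> opnorm Q" by (rule opnorm_nonneg[OF bQ])
  show "\<exists>no. \<forall>n\<ge>no. norm (opnorm (\<lambda>x m. S x m - (\<Sum>k=1..n. fcoeff a S k * (wshift a ^^ k) x m)) - 0) < \<epsilon>"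
  proof (intro exI allI impI)
    fix n assume n: "N \<le> n"
    define d where "d = (\<lambda>k. cp c N k - cS k)"
    define U where "U = (\<lambda>x m. \<Sum>k=1..n. d k * (wshift a ^^ k) x m)"
    define D where "D = (\<Sum>k=1..n. (cmod (d k))\<^sup>2 * (beta a k)\<^sup>2)"
    have decomp: "(\<lambda>m. S x m - (\<Sum>k=1..n. fcoeff a S k * (wshift a ^^ k) x m)) = (\<lambda>m. Q x m + 1 * U x m)" for x
    proof
      fix m
      have "polyop a c N x m = (\<Sum>k=1..n. cp c N k * (wshift a ^^ k) x m)"
      proof -
        have "(\<Sum>k=1..n. cp c N k * (wshift a ^^ k) x m) = (\<Sum>k\<in>{1..N}. cp c N k * (wshift a ^^ k) x m)"
          using n by (intro sum.mono_neutral_right) (auto simp: cp_def)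
        then show ?thesis unfolding polyop_def by (auto simp: cp_def intro!: sum.cong)
      qed
      then show "S x m - (\<Sum>k=1..n. fcoeff a S k * (wshift a ^^ k) x m) = Q x m + 1 * U x m"
        unfolding Q_def U_def d_def fcoeff_eq by (simp add: sum_subtractf algebra_simps)
    qed
    have D: "sqrt D \<le> \<epsilon>'"
    proof -
      have "D = (\<Sum>k=1..n. (cmod (Q (unitvec 0) k))\<^sup>2)"
        unfolding D_def
      proof (rule sum.cong[OF refl])
        fix k
        have "cmod (d k) * beta a k = cmod (Q (unitvec 0) k)"
          unfolding d_def beta_wt Q_def using coef_id[of k c N]
          by (metis minus_diff_eq norm_minus_cancel norm_mult)
        then show "(cmod (d k))\<^sup>2 * (beta a k)\<^sup>2 = (cmod (Q (unitvec 0) k))\<^sup>2"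
          by (metis power_mult_distrib)
      qed
      also have "\<dots> \<le> (l2norm (Q (unitvec 0)))\<^sup>2"
        by (rule l2_partial[OF bop_l2[OF bQ l2_unitvec(1)]]) simp
      also have "\<dots> \<le> (opnorm Q)\<^sup>2"
        using opnorm_bound[OF bQ l2_unitvec(1), of 0] l2_unitvec(2)
          l2_nonneg[OF bop_l2[OF bQ l2_unitvec(1)]] by (simp add: power_mono)
      finally have "sqrt D \<le> opnorm Q" using oQ by (simp add: real_sqrt_le_iff real_le_lsqrt)
      then show ?thesis using cN by (simp add: Q_def)
    qed
    have le: "opnorm (\<lambda>x m. S x m - (\<Sum>k=1..n. fcoeff a S k * (wshift a ^^ k) x m)) \<le> \<epsilon> / 2"
     and ge: "0 \<le> opnorm (\<lambda>x m. S x m - (\<Sum>k=1..n. fcoeff a S k * (wshift a ^^ k) x m))"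
    proof -
      have U: "U x \<in> l2" "l2norm (U x) \<le> Kc * sqrt D * l2norm x" if "x \<in> l2" for x
        using hs[OF a0 dec sa that, of d n] unfolding U_def Kc_def D_def by auto
      have A1: "\<forall>x\<in>l2. (\<lambda>m. S x m - (\<Sum>k=1..n. fcoeff a S k * (wshift a ^^ k) x m)) \<in> l2"
        unfolding decomp using l2_lin(1)[OF bop_l2[OF bQ] U(1)] by blast
      have A2: "\<forall>x\<in>l2. l2norm x \<le> 1 \<longrightarrow> l2norm (\<lambda>m. S x m - (\<Sum>k=1..n. fcoeff a S k * (wshift a ^^ k) x m)) \<le> \<epsilon> / 2"
      proof (intro ballI impI)
        fix x assume x: "x \<in> l2" and x1: "l2norm x \<le> 1"
        have x0: "0 \<le> l2norm x" by (rule l2_nonneg[OF x])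
        have "l2norm (\<lambda>m. Q x m + 1 * U x m) \<le> l2norm (Q x) + cmod 1 * l2norm (U x)"
          by (rule l2_lin(2)[OF bop_l2[OF bQ x] U(1)[OF x]])
        also have "\<dots> \<le> opnorm Q * l2norm x + Kc * sqrt D * l2norm x"
          using opnorm_bound[OF bQ x] U(2)[OF x] by simp
        also have "\<dots> \<le> \<epsilon>' * 1 + Kc * \<epsilon>' * 1"
        proof (intro add_mono mult_mono)
          show "opnorm Q \<le> \<epsilon>'" using cN by (simp add: Q_def)
        qed (use x1 x0 \<epsilon>' Kc D in \<open>auto simp: D_def intro: sum_nonneg\<close>)
        also have "\<dots> = \<epsilon>' * (Kc + 1)" by (simp add: algebra_simps)
        also have "\<dots> = \<epsilon> / 2" unfolding \<epsilon>'_def using Kc by (simp add: divide_simps)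
        finally show "l2norm (\<lambda>m. S x m - (\<Sum>k=1..n. fcoeff a S k * (wshift a ^^ k) x m)) \<le> \<epsilon> / 2"
          unfolding decomp .
      qed
      show "opnorm (\<lambda>x m. S x m - (\<Sum>k=1..n. fcoeff a S k * (wshift a ^^ k) x m)) \<le> \<epsilon> / 2"
        by (rule opnorm_le(2)[OF A1 A2])
      show "0 \<le> opnorm (\<lambda>x m. S x m - (\<Sum>k=1..n. fcoeff a S k * (wshift a ^^ k) x m))"
        by (rule opnorm_le(1)[OF A1 A2])
    qed
    show "norm (opnorm (\<lambda>x m. S x m - (\<Sum>k=1..n. fcoeff a S k * (wshift a ^^ k) x m)) - 0) < \<epsilon>"
      using le ge \<epsilon> by simp
  qed
qed

end

theorem mainTheorem9:
  fixes a :: "nat \<Rightarrow> complex"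
    and S :: "(nat \<Rightarrow> complex) \<Rightarrow> (nat \<Rightarrow> complex)"
  assumes "\<forall>n. a n \<noteq> 0"
    and "\<forall>n. cmod (a (Suc n)) \<le> cmod (a n)"
    and "summable (\<lambda>n. (cmod (a n))\<^sup>2)"
    and "S \<in> alg_T a"
  shows "(\<lambda>n. opnorm (\<lambda>x m. S x m - (\<Sum>k=1..n. fcoeff a S k * (wshift a ^^ k) x m)))
           \<longlonglongrightarrow> 0"
proof -
  interpret setting a S using assms by unfold_locales
  show ?thesis by (rule main)
qed


end
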